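(* Let $\mathcal X=\{1,\ldots,n\}$, let $N>1$ be an integer, and let $M=[m_{ij}]$ be an $n\times n$ matrix with nonnegative entries such that all entries of $M^N$ are positive. Let $\lambda_M$ be the spectral radius of $M$, $\phi,\hat\phi$ right and left eigenvectors of $M$ for $\lambda_M$ with positive entries normalized so that $\sum_x\phi(x)\hat\phi(x)=1$, $\bar\nu(x)=\phi(x)\hat\phi(x)$ and $\bar\Pi=\lambda_M^{-1}\operatorname{diag}(\phi)^{-1}M\operatorname{diag}(\phi)$. Let $\mu_0$ be a measure on $\mathcal X$ with $\mu_0(x)>0$ for all $x$, and let $\mathfrak M(2N)$ be the measure on $\mathcal X^{2N+1}$ given by $\mathfrak M(2N)(x_0,\ldots,x_{2N})=\mu_0(x_0)\prod_{t=0}^{2N-1}m_{x_tx_{t+1}}$. Let $\nu$ be a probability measure on $\mathcal X$ and let $\mathfrak M^*[\nu,\nu](2N)$ be the Schrödinger bridge, i.e. the minimizer of $\mathbb D(P\|\mathfrak M(2N))$ over probability distributions $P$ on $\mathcal X^{2N+1}$ whose marginals at times $0$ and $2N$ both equal $\nu$. Suppose that the (Markovian) transition matrix $\Pi_\nu$ of $\mathfrak M^*[\nu,\nu](2N)$ does not depend on time. Then $\nu=\bar\nu$ and $\Pi_\nu=\bar\Pi$.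
   Context: Relative entropy of a probability distribution $P$ with respect to a nonnegative measure $Q$ on a finite set: $\mathbb D(P\|Q)=\sum_x P(x)\log\frac{P(x)}{Q(x)}$ if $\mathrm{supp}(P)\subseteq\mathrm{supp}(Q)$ (with $0\log0=0$), and $+\infty$ otherwise. The Schrödinger bridge exists, is unique, and is a (possibly time-inhomogeneous) Markov measure. *)

theory Defs
  imports "HOL-Analysis.Analysis" "HOL-Library.FuncSet"
    "Jordan_Normal_Form.Matrix" "Jordan_Normal_Form.Spectral_Radius"
begin

definition rel_entropy :: "'a set \<Rightarrow> ('a \<Rightarrow> real) \<Rightarrow> ('a \<Rightarrow> real) \<Rightarrow> ereal" where
  "rel_entropy S P Q =
     (if (\<forall>x\<in>S. P x \<noteq> 0 \<longrightarrow> Q x \<noteq> 0)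
      then ereal (\<Sum>x\<in>S. if P x = 0 then 0 else P x * ln (P x / Q x))
      else \<infinity>)"

definition paths :: "nat \<Rightarrow> nat \<Rightarrow> (nat \<Rightarrow> nat) set" where
  "paths n T = PiE {0..T} (\<lambda>_. {..<n})"

definition ref_measure :: "real mat \<Rightarrow> (nat \<Rightarrow> real) \<Rightarrow> nat \<Rightarrow> (nat \<Rightarrow> nat) \<Rightarrow> real" where
  "ref_measure M mu0 T x = mu0 (x 0) * (\<Prod>t<T. M $$ (x t, x (Suc t)))"

definition prob_dist_on :: "'a set \<Rightarrow> ('a \<Rightarrow> real) \<Rightarrow> bool" where
  "prob_dist_on S P \<longleftrightarrow> (\<forall>x\<in>S. 0 \<le> P x) \<and> (\<Sum>x\<in>S. P x) = 1"

definition marginal :: "nat \<Rightarrow> nat \<Rightarrow> ((nat \<Rightarrow> nat) \<Rightarrow> real) \<Rightarrow> nat \<Rightarrow> nat \<Rightarrow> real" where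
  "marginal n T P t y = (\<Sum>x\<in>{x\<in>paths n T. x t = y}. P x)"

definition bridge_admissible ::
  "nat \<Rightarrow> nat \<Rightarrow> (nat \<Rightarrow> real) \<Rightarrow> (nat \<Rightarrow> real) \<Rightarrow> ((nat \<Rightarrow> nat) \<Rightarrow> real) \<Rightarrow> bool" where
  "bridge_admissible n T nu0 nu1 P \<longleftrightarrow>
     prob_dist_on (paths n T) P \<and>
     (\<forall>y<n. marginal n T P 0 y = nu0 y) \<and> (\<forall>y<n. marginal n T P T y = nu1 y)"

definition is_schroedinger_bridge ::
  "nat \<Rightarrow> nat \<Rightarrow> ((nat \<Rightarrow> nat) \<Rightarrow> real) \<Rightarrow> (nat \<Rightarrow> real) \<Rightarrow> (nat \<Rightarrow> real) \<Rightarrow> ((nat \<Rightarrow> nat) \<Rightarrow> real) \<Rightarrow> bool" where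
  "is_schroedinger_bridge n T R nu0 nu1 P \<longleftrightarrow>
     bridge_admissible n T nu0 nu1 P \<and>
     (\<forall>P'. bridge_admissible n T nu0 nu1 P' \<longrightarrow>
        rel_entropy (paths n T) P R \<le> rel_entropy (paths n T) P' R)"

definition stochastic_matrix :: "nat \<Rightarrow> (nat \<Rightarrow> nat \<Rightarrow> real) \<Rightarrow> bool" where
  "stochastic_matrix n Tr \<longleftrightarrow> (\<forall>x<n. \<forall>y<n. 0 \<le> Tr x y) \<and> (\<forall>x<n. (\<Sum>y<n. Tr x y) = 1)"

end

theory Submission
  imports Defs
begin


definition walk :: "nat \<Rightarrow> (nat \<Rightarrow> nat \<Rightarrow> real) \<Rightarrow> nat \<Rightarrow> (nat \<Rightarrow> nat) \<Rightarrow> bool" where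
  "walk n m L w \<longleftrightarrow> (\<forall>t\<le>L. w t < n) \<and> (\<forall>t<L. 0 < m (w t) (w (Suc t)))"

definition wp :: "(nat \<Rightarrow> nat \<Rightarrow> real) \<Rightarrow> nat \<Rightarrow> (nat \<Rightarrow> nat) \<Rightarrow> real" where
  "wp K L w = (\<Prod>t<L. K (w t) (w (Suc t)))"

definition cat :: "(nat \<Rightarrow> nat) \<Rightarrow> nat \<Rightarrow> (nat \<Rightarrow> nat) \<Rightarrow> nat \<Rightarrow> nat" where
  "cat u L v = (\<lambda>t. if t \<le> L then u t else v (t - L))"

lemma walk_pow:
  assumes M: "M \<in> carrier_mat n n" and nn: "\<forall>i<n. \<forall>j<n. 0 \<le> M $$ (i, j)"
  shows "i < n \<Longrightarrow> j < n \<Longrightarrow> 0 < (M ^\<^sub>m k) $$ (i, j) \<Longrightarrow>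
     \<exists>w. walk n (\<lambda>a b. M $$ (a, b)) k w \<and> w 0 = i \<and> w k = j"
proof (induction k arbitrary: j)
  case 0
  then have "i = j" using M by (auto simp: pow_mat.simps one_mat_def split: if_splits)
  then show ?case using 0 by (intro exI[of _ "\<lambda>_. i"]) (auto simp: walk_def)
next
  case (Suc k)
  have Pk: "M ^\<^sub>m k \<in> carrier_mat n n" using M by simp
  have "(M ^\<^sub>m Suc k) $$ (i, j) = (\<Sum>c<n. (M ^\<^sub>m k) $$ (i, c) * M $$ (c, j))"
    using Suc.prems M Pk by (simp add: scalar_prod_def lessThan_atLeast0 mult.commute)
  with Suc.prems obtain c where c: "c < n" "0 < (M ^\<^sub>m k) $$ (i, c) * M $$ (c, j)"
    by (metis (no_types, lifting) lessThan_iff not_less sum_nonpos)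
  have "0 \<le> M $$ (c, j)" using nn c Suc.prems by auto
  then have "0 < M $$ (c, j)" "0 < (M ^\<^sub>m k) $$ (i, c)"
    using c(2) by (auto simp: zero_less_mult_iff)
  with Suc.IH[of c] obtain w where w: "walk n (\<lambda>a b. M $$ (a, b)) k w" "w 0 = i" "w k = c"
    using Suc.prems c(1) by blast
  show ?case
    apply (intro exI[of _ "w(Suc k := j)"])
    using w \<open>0 < M $$ (c, j)\<close> Suc.prems unfolding walk_def
    by (auto simp: le_Suc_eq less_Suc_eq)
qed

lemma walk_mono: "walk n m L w \<Longrightarrow> L' \<le> L \<Longrightarrow> walk n m L' w"
  by (auto simp: walk_def)

lemma walk_cat:
  assumes "walk n m L1 u" "walk n m L2 v" "u L1 = v 0"
  shows "walk n m (L1 + L2) (cat u L1 v)"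
  unfolding walk_def
proof (intro conjI allI impI)
  fix t assume "t \<le> L1 + L2"
  then show "cat u L1 v t < n" using assms unfolding walk_def cat_def by auto
next
  fix t assume t: "t < L1 + L2"
  show "0 < m (cat u L1 v t) (cat u L1 v (Suc t))"
  proof (cases "t < L1")
    case True
    then show ?thesis using assms unfolding walk_def cat_def by auto
  next
    case False
    then obtain s where s: "t = L1 + s" "s < L2" using t by (metis add_less_cancel_left le_Suc_ex not_less)
    then have "cat u L1 v t = v s" "cat u L1 v (Suc t) = v (Suc s)"
      using assms(3) by (auto simp: cat_def)
    then show ?thesis using assms s unfolding walk_def by auto
  qed
qed

lemma cat_0[simp]: "cat u L v 0 = u 0" by (simp add: cat_def)
lemma cat_end[simp]: "u L = v 0 \<Longrightarrow> cat u L v (L + L2) = v L2" by (auto simp: cat_def)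

lemma wp_cat:
  assumes "u L1 = v 0"
  shows "wp K (L1 + L2) (cat u L1 v) = wp K L1 u * wp K L2 v"
proof (induction L2)
  case 0
  show ?case by (simp add: wp_def cat_def)
next
  case (Suc L2)
  have "wp K (L1 + Suc L2) (cat u L1 v) = wp K (L1 + L2) (cat u L1 v) *
     K (cat u L1 v (L1 + L2)) (cat u L1 v (Suc (L1 + L2)))"
    by (simp add: wp_def)
  also have "K (cat u L1 v (L1 + L2)) (cat u L1 v (Suc (L1 + L2))) = K (v L2) (v (Suc L2))"
    using assms by (auto simp: cat_def)
  also have "wp K (L1 + L2) (cat u L1 v) * K (v L2) (v (Suc L2)) = wp K L1 u * wp K (Suc L2) v"
    using Suc.IH by (simp add: wp_def)
  finally show ?case .
qed

lemma wp_pos: "walk n m L w \<Longrightarrow> (\<forall>i<n. \<forall>j<n. 0 < m i j \<longrightarrow> 0 < K i j) \<Longrightarrow> 0 < wp K L w"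
  unfolding wp_def walk_def by (intro prod_pos) auto

lemma wp_cong: "(\<And>t. t \<le> L \<Longrightarrow> u t = v t) \<Longrightarrow> wp K L u = wp K L v"
  unfolding wp_def by (intro prod.cong) auto

lemma walk_cong: "(\<And>t. t \<le> L \<Longrightarrow> u t = v t) \<Longrightarrow> walk n m L u = walk n m L v"
  unfolding walk_def by auto



locale sb =
  fixes n N :: nat and M :: "real mat" and phi phihat :: "real vec"
    and mu0 nu :: "nat \<Rightarrow> real" and P :: "(nat \<Rightarrow> nat) \<Rightarrow> real"
    and Tr :: "nat \<Rightarrow> nat \<Rightarrow> real"
  assumes N: "N > 1"
    and M_dim: "M \<in> carrier_mat n n"
    and M_nonneg: "\<forall>i<n. \<forall>j<n. 0 \<le> M $$ (i, j)"
    and M_prim: "\<forall>i<n. \<forall>j<n. 0 < (M ^\<^sub>m N) $$ (i, j)"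
    and phi_dim: "phi \<in> carrier_vec n" and phihat_dim: "phihat \<in> carrier_vec n"
    and phi_pos: "\<forall>i<n. 0 < phi $ i" and phihat_pos: "\<forall>i<n. 0 < phihat $ i"
    and phi_right: "M *\<^sub>v phi = spectral_radius (map_mat complex_of_real M) \<cdot>\<^sub>v phi"
    and phihat_left: "transpose_mat M *\<^sub>v phihat
                        = spectral_radius (map_mat complex_of_real M) \<cdot>\<^sub>v phihat"
    and normalized: "(\<Sum>x<n. phi $ x * phihat $ x) = 1"
    and mu0_pos: "\<forall>x<n. 0 < mu0 x"
    and nu_prob: "prob_dist_on {..<n} nu"
    and bridge: "is_schroedinger_bridge n (2 * N) (ref_measure M mu0 (2 * N)) nu nu P"
    and Pi_stoch: "stochastic_matrix n Tr"
    and homogeneous: "\<forall>x\<in>paths n (2 * N). P x = nu (x 0) * (\<Prod>t<2 * N. Tr (x t) (x (Suc t)))"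
begin

abbreviation "T \<equiv> 2 * N"
definition "m i j = M $$ (i, j)"
abbreviation "R \<equiv> ref_measure M mu0 (2 * N)"
abbreviation "S \<equiv> paths n (2 * N)"

lemma n_pos: "0 < n"
  using nu_prob by (auto simp: prob_dist_on_def intro: Nat.gr0I)

lemma m_nonneg: "i < n \<Longrightarrow> j < n \<Longrightarrow> 0 \<le> m i j"
  using M_nonneg by (auto simp: m_def)

lemma walkN: "i < n \<Longrightarrow> j < n \<Longrightarrow> \<exists>w. walk n m N w \<and> w 0 = i \<and> w N = j"
  using walk_pow[OF M_dim M_nonneg, of i j N] M_prim by (auto simp: m_def[abs_def])

lemma finite_S: "finite S" unfolding paths_def by (intro finite_PiE) auto

lemma S_range: "x \<in> S \<Longrightarrow> t \<le> T \<Longrightarrow> x t < n"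
  unfolding paths_def by (auto simp: PiE_iff)

lemma restrict_in_S: "(\<And>t. t \<le> T \<Longrightarrow> w t < n) \<Longrightarrow> restrict w {0..T} \<in> S"
  unfolding paths_def by (auto simp: PiE_iff)

lemma walk_in_S: "walk n K T w \<Longrightarrow> restrict w {0..T} \<in> S"
  by (intro restrict_in_S) (auto simp: walk_def)

lemma S_restrict: "x \<in> S \<Longrightarrow> restrict x {0..T} = x"
  unfolding paths_def by (auto simp: PiE_iff extensional_restrict)

lemma R_eq: "R w = mu0 (w 0) * wp m T w"
  by (simp add: ref_measure_def wp_def m_def)

lemma wp_restrict: "wp K T (restrict w {0..T}) = wp K T w"
  by (intro wp_cong) auto

lemma R_restrict: "R (restrict w {0..T}) = R w"
  by (simp add: R_eq wp_restrict)

lemma P_eq: "x \<in> S \<Longrightarrow> P x = nu (x 0) * wp Tr T x"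
  using homogeneous by (simp add: wp_def)

lemma P_restrict: "(\<And>t. t \<le> T \<Longrightarrow> w t < n) \<Longrightarrow> P (restrict w {0..T}) = nu (w 0) * wp Tr T w"
  using P_eq[OF restrict_in_S] by (simp add: wp_restrict)

lemma wp_nonneg: "(\<And>t. t \<le> L \<Longrightarrow> w t < n) \<Longrightarrow> \<forall>i<n. \<forall>j<n. 0 \<le> K i j \<Longrightarrow> 0 \<le> wp K L w"
  unfolding wp_def by (intro prod_nonneg) auto

lemma R_nonneg: "x \<in> S \<Longrightarrow> 0 \<le> R x"
proof -
  assume x: "x \<in> S"
  have "0 \<le> mu0 (x 0)" using mu0_pos S_range[OF x, of 0] by (simp add: less_imp_le)
  moreover have "0 \<le> wp m T x" using m_nonneg S_range[OF x] by (intro wp_nonneg) auto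
  ultimately show ?thesis by (simp add: R_eq)
qed

lemma R_pos_iff: "x \<in> S \<Longrightarrow> 0 < R x \<longleftrightarrow> walk n m T x"
proof
  assume x: "x \<in> S" and "0 < R x"
  then have "wp m T x \<noteq> 0" by (auto simp: R_eq)
  then have "\<forall>t<T. m (x t) (x (Suc t)) \<noteq> 0" by (auto simp: wp_def)
  then show "walk n m T x" using S_range[OF x] m_nonneg
    by (auto simp: walk_def order.strict_iff_order)
next
  assume x: "x \<in> S" and "walk n m T x"
  have "0 < wp m T x" by (rule wp_pos[OF \<open>walk n m T x\<close>]) auto
  then show "0 < R x" using mu0_pos S_range[OF x, of 0]
    by (simp add: R_eq)
qed

lemma Tr_nonneg: "i < n \<Longrightarrow> j < n \<Longrightarrow> 0 \<le> Tr i j"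
  using Pi_stoch by (auto simp: stochastic_matrix_def)

lemma nu_nonneg: "i < n \<Longrightarrow> 0 \<le> nu i"
  using nu_prob by (auto simp: prob_dist_on_def)

lemma P_nonneg: "x \<in> S \<Longrightarrow> 0 \<le> P x"
  using bridge by (auto simp: is_schroedinger_bridge_def bridge_admissible_def prob_dist_on_def)

lemma walk2N: "i < n \<Longrightarrow> j < n \<Longrightarrow> \<exists>w. walk n m T w \<and> w 0 = i \<and> w T = j"
proof -
  assume ij: "i < n" "j < n"
  obtain u where u: "walk n m N u" "u 0 = i" "u N = 0" using walkN[OF ij(1) n_pos] by blast
  obtain v where v: "walk n m N v" "v 0 = 0" "v N = j" using walkN[OF n_pos ij(2)] by blast
  show ?thesis using walk_cat[OF u(1) v(1)] u v
    by (intro exI[of _ "cat u N v"]) (auto simp: mult_2)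
qed

definition Z :: "nat \<Rightarrow> nat \<Rightarrow> real" where
  "Z a b = (\<Sum>x\<in>{x\<in>S. x 0 = a \<and> x T = b}. R x)"

lemma Z_pos: "a < n \<Longrightarrow> b < n \<Longrightarrow> 0 < Z a b"
proof -
  assume ab: "a < n" "b < n"
  obtain w where w: "walk n m T w" "w 0 = a" "w T = b" using walk2N[OF ab] by blast
  let ?x = "restrict w {0..T}"
  have x: "?x \<in> {x\<in>S. x 0 = a \<and> x T = b}" using walk_in_S[OF w(1)] w by auto
  have "0 < wp m T w" by (rule wp_pos[OF w(1)]) auto
  then have "0 < R w" using mu0_pos w(2) ab by (simp add: R_eq)
  then have "0 < R ?x" by (simp add: R_restrict)
  then show ?thesis unfolding Z_def
    by (intro sum_pos2[OF _ x]) (auto simp: finite_S R_nonneg)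
qed

definition Pc :: "(nat \<Rightarrow> nat) \<Rightarrow> real" where
  "Pc x = nu (x 0) * nu (x T) * R x / Z (x 0) (x T)"

lemma sum_group_end:
  assumes "\<And>x. x \<in> A \<Longrightarrow> g x < n" "A \<subseteq> S"
  shows "sum f A = (\<Sum>b<n. sum f {x\<in>A. g x = b})"
  using assms finite_subset[OF assms(2) finite_S] by (intro sum.group[symmetric]) auto

lemma Pc_marg0: "y < n \<Longrightarrow> marginal n T Pc 0 y = nu y"
proof -
  assume y: "y < n"
  let ?A = "{x\<in>S. x 0 = y}"
  have "marginal n T Pc 0 y = (\<Sum>b<n. sum Pc {x\<in>?A. x T = b})"
    unfolding marginal_def by (intro sum_group_end) (auto simp: S_range)
  also have "\<dots> = (\<Sum>b<n. nu y * nu b)"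
  proof (intro sum.cong refl)
    fix b assume b: "b \<in> {..<n}"
    have e: "{x\<in>?A. x T = b} = {x\<in>S. x 0 = y \<and> x T = b}" by auto
    have "sum Pc {x\<in>?A. x T = b} = (\<Sum>x\<in>{x\<in>S. x 0 = y \<and> x T = b}. nu y * nu b / Z y b * R x)"
      unfolding e by (intro sum.cong refl) (auto simp: Pc_def)
    also have "\<dots> = nu y * nu b / Z y b * Z y b" by (simp add: Z_def sum_distrib_left)
    also have "\<dots> = nu y * nu b" using Z_pos[OF y, of b] b by auto
    finally show "sum Pc {x\<in>?A. x T = b} = nu y * nu b" .
  qed
  also have "\<dots> = nu y" using nu_prob by (simp add: prob_dist_on_def sum_distrib_left[symmetric])
  finally show ?thesis .
qed

lemma Pc_margT: "y < n \<Longrightarrow> marginal n T Pc T y = nu y"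
proof -
  assume y: "y < n"
  let ?A = "{x\<in>S. x T = y}"
  have "marginal n T Pc T y = (\<Sum>b<n. sum Pc {x\<in>?A. x 0 = b})"
    unfolding marginal_def by (intro sum_group_end) (auto simp: S_range)
  also have "\<dots> = (\<Sum>b<n. nu b * nu y)"
  proof (intro sum.cong refl)
    fix b assume b: "b \<in> {..<n}"
    have e: "{x\<in>?A. x 0 = b} = {x\<in>S. x 0 = b \<and> x T = y}" by auto
    have "sum Pc {x\<in>?A. x 0 = b} = (\<Sum>x\<in>{x\<in>S. x 0 = b \<and> x T = y}. nu b * nu y / Z b y * R x)"
      unfolding e by (intro sum.cong refl) (auto simp: Pc_def)
    also have "\<dots> = nu b * nu y / Z b y * Z b y" by (simp add: Z_def sum_distrib_left)
    also have "\<dots> = nu b * nu y" using Z_pos[OF _ y, of b] b by auto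
    finally show "sum Pc {x\<in>?A. x 0 = b} = nu b * nu y" .
  qed
  also have "\<dots> = nu y" using nu_prob by (simp add: prob_dist_on_def sum_distrib_right[symmetric])
  finally show ?thesis .
qed

lemma Pc_adm: "bridge_admissible n T nu nu Pc"
proof -
  have nn: "\<forall>x\<in>S. 0 \<le> Pc x"
    using S_range nu_nonneg R_nonneg Z_pos by (auto simp: Pc_def intro!: divide_nonneg_pos)
  have "sum Pc S = (\<Sum>b<n. sum Pc {x\<in>S. x 0 = b})"
    by (intro sum_group_end) (auto simp: S_range)
  also have "\<dots> = (\<Sum>b<n. nu b)" using Pc_marg0 by (simp add: marginal_def)
  also have "\<dots> = 1" using nu_prob by (simp add: prob_dist_on_def)
  finally show ?thesis using nn Pc_marg0 Pc_margT
    by (auto simp: bridge_admissible_def prob_dist_on_def)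
qed

lemma support: "x \<in> S \<Longrightarrow> P x \<noteq> 0 \<Longrightarrow> R x \<noteq> 0"
proof -
  assume x: "x \<in> S" "P x \<noteq> 0"
  have c: "\<forall>x\<in>S. Pc x \<noteq> 0 \<longrightarrow> R x \<noteq> 0" by (simp add: Pc_def)
  have fin: "rel_entropy S Pc R \<noteq> \<infinity>" unfolding rel_entropy_def using c by simp
  have "rel_entropy S P R \<le> rel_entropy S Pc R"
    using bridge Pc_adm unfolding is_schroedinger_bridge_def by blast
  then have fin2: "rel_entropy S P R \<noteq> \<infinity>" using fin by (metis ereal_infty_less_eq(1))
  have "\<forall>x\<in>S. P x \<noteq> 0 \<longrightarrow> R x \<noteq> 0"
  proof (rule ccontr)
    assume "\<not> (\<forall>x\<in>S. P x \<noteq> 0 \<longrightarrow> R x \<noteq> 0)"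
    then have "rel_entropy S P R = \<infinity>" unfolding rel_entropy_def by (simp only: if_False)
    then show False using fin2 by simp
  qed
  then show ?thesis using x by blast
qed

end


definition hh :: "real \<Rightarrow> real \<Rightarrow> real" where
  "hh u r = (if u = 0 then 0 else u * ln (u / r))"

lemma sum_upd2:
  fixes f :: "'a \<Rightarrow> real"
  assumes "finite A" "p \<noteq> q" "p \<in> A" "q \<in> A"
  shows "sum (f(p := a, q := b)) A = sum f A - f p - f q + a + b"
proof -
  have "sum (f(p := a, q := b)) A = (f(p := a, q := b)) p + sum (f(p := a, q := b)) (A - {p})"
    using assms by (simp add: sum.remove)
  also have "sum (f(p := a, q := b)) (A - {p}) = (f(p := a, q := b)) q + sum (f(p := a, q := b)) (A - {p} - {q})"
    by (rule sum.remove) (use assms in auto)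
  also have "sum (f(p := a, q := b)) (A - {p} - {q}) = sum f (A - {p} - {q})"
    by (intro sum.cong) auto
  also have "sum f A = f p + (f q + sum f (A - {p} - {q}))"
    using assms by (simp add: sum.remove[of A p] sum.remove[of "A - {p}" q])
  ultimately show ?thesis using assms by (simp add: fun_upd_def)
qed

lemma sum_upd2_out:
  assumes "p \<notin> A" "q \<notin> A"
  shows "sum (f(p := a, q := b)) A = sum f A"
  using assms by (intro sum.cong) auto

lemma key_ineq:
  fixes a r e :: real
  assumes "0 < a" "0 < r" "0 < a + e"
  shows "(a + e) * ln ((a + e) / r) \<le> a * ln (a / r) + e * (ln (a / r) + 1) + e^2 / a"
proof -
  have eq: "(a + e) / r = (a / r) * (1 + e / a)" using assms by (simp add: field_simps)
  have "0 < 1 + e / a" using assms by (simp add: field_simps)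
  have l0: "ln ((a / r) * (1 + e / a)) = ln (a / r) + ln (1 + e / a)"
    by (rule ln_mult_pos) (use assms \<open>0 < 1 + e / a\<close> in auto)
  have l: "ln ((a + e) / r) = ln (a / r) + ln (1 + e / a)"
    by (subst eq) (rule l0)
  have "ln (1 + e / a) \<le> e / a" using ln_le_minus_one[OF \<open>0 < 1 + e / a\<close>] by simp
  then have "(a + e) * ln (1 + e / a) \<le> (a + e) * (e / a)"
    using assms by (intro mult_left_mono) auto
  also have "(a + e) * (e / a) = e + e^2 / a" using assms by (simp add: field_simps power2_eq_square)
  finally show ?thesis unfolding l by (simp add: algebra_simps)
qed

context sb begin

lemma opt_ineq:
  assumes p: "p \<in> S" and q: "q \<in> S" and pq: "p \<noteq> q" and e0: "p 0 = q 0" and eT: "p T = q T"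
    and Rp: "R p \<noteq> 0" and Rq: "R q \<noteq> 0" and e1: "0 \<le> P p + e" and e2: "0 \<le> P q - e"
  shows "hh (P p) (R p) + hh (P q) (R q) \<le> hh (P p + e) (R p) + hh (P q - e) (R q)"
proof -
  define Q where "Q = P(p := P p + e, q := P q - e)"
  have adm: "bridge_admissible n T nu nu P" using bridge by (simp add: is_schroedinger_bridge_def)
  have margeq: "marginal n T Q t y = marginal n T P t y" if "p t = q t" for t y
  proof (cases "p t = y")
    case True
    then show ?thesis unfolding marginal_def Q_def
      using that p q pq finite_S by (subst sum_upd2) auto
  next
    case False
    then show ?thesis unfolding marginal_def Q_def
      using that by (subst sum_upd2_out) auto
  qed
  have "sum Q S = sum P S" unfolding Q_def using p q pq finite_S by (subst sum_upd2) auto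
  moreover have "\<forall>x\<in>S. 0 \<le> Q x" using adm e1 e2 by (auto simp: Q_def bridge_admissible_def prob_dist_on_def)
  ultimately have admQ: "bridge_admissible n T nu nu Q"
    using adm margeq[OF e0] margeq[OF eT] by (auto simp: bridge_admissible_def prob_dist_on_def)
  have suppP: "\<forall>x\<in>S. P x \<noteq> 0 \<longrightarrow> R x \<noteq> 0" using support by blast
  have suppQ: "\<forall>x\<in>S. Q x \<noteq> 0 \<longrightarrow> R x \<noteq> 0" using support Rp Rq by (auto simp: Q_def)
  have EP: "rel_entropy S P R = ereal (\<Sum>x\<in>S. hh (P x) (R x))"
    using suppP by (simp add: rel_entropy_def hh_def)
  have hQ: "(\<lambda>x. hh (Q x) (R x)) = (\<lambda>x. hh (P x) (R x))(p := hh (P p + e) (R p), q := hh (P q - e) (R q))"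
    using pq by (auto simp: Q_def)
  have sQ: "(\<Sum>x\<in>S. hh (Q x) (R x)) = (\<Sum>x\<in>S. hh (P x) (R x)) - hh (P p) (R p) - hh (P q) (R q)
      + hh (P p + e) (R p) + hh (P q - e) (R q)"
    unfolding hQ by (rule sum_upd2[OF finite_S pq p q])
  have EQ: "rel_entropy S Q R = ereal ((\<Sum>x\<in>S. hh (P x) (R x)) - hh (P p) (R p) - hh (P q) (R q)
      + hh (P p + e) (R p) + hh (P q - e) (R q))"
    unfolding sQ[symmetric] using suppQ by (simp add: rel_entropy_def hh_def)
  have "rel_entropy S P R \<le> rel_entropy S Q R" using bridge admQ by (simp add: is_schroedinger_bridge_def)
  then show ?thesis unfolding EP EQ by simp
qed

lemma R_pos: "x \<in> S \<Longrightarrow> R x \<noteq> 0 \<Longrightarrow> 0 < R x"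
  using R_nonneg by (simp add: order.not_eq_order_implies_strict)

lemma ratio_not_less:
  assumes p: "p \<in> S" and q: "q \<in> S" and e0: "p 0 = q 0" and eT: "p T = q T"
    and Rp: "R p \<noteq> 0" and Pp: "0 < P p" and Pq: "0 < P q"
  shows "\<not> (P p / R p < P q / R q)"
proof
  assume lt: "P p / R p < P q / R q"
  have pq: "p \<noteq> q" using lt by auto
  have Rq: "R q \<noteq> 0" using support q Pq by auto
  have rp: "0 < R p" "0 < R q" using R_pos p q Rp Rq by auto
  define u where "u = P p / R p"
  define v where "v = P q / R q"
  have uv: "0 < u" "0 < v" "u < v" using Pp Pq rp lt by (auto simp: u_def v_def)
  define d where "d = ln v - ln u"
  have d: "0 < d" using uv by (simp add: d_def)
  define c where "c = 1 / P p + 1 / P q"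
  have c: "0 < c" using Pp Pq unfolding c_def by (intro add_pos_pos) auto
  define e where "e = min (P q / 2) (d / (2 * c))"
  have e: "0 < e" "e < P q" "e * c \<le> d / 2" using Pq d c
    by (auto simp: e_def min_def field_simps)
  have i1: "hh (P p + e) (R p) \<le> hh (P p) (R p) + e * (ln u + 1) + e^2 / P p"
    using key_ineq[OF Pp rp(1), of e] e Pp by (simp add: hh_def u_def)
  have i2: "hh (P q - e) (R q) \<le> hh (P q) (R q) + (-e) * (ln v + 1) + (-e)^2 / P q"
    using key_ineq[OF Pq rp(2), of "-e"] e Pq by (simp add: hh_def v_def)
  have "hh (P p) (R p) + hh (P q) (R q) \<le> hh (P p + e) (R p) + hh (P q - e) (R q)"
    using opt_ineq[OF p q pq e0 eT Rp Rq] e Pp by simp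
  then have "0 \<le> e * (ln u - ln v) + e^2 * c"
    using i1 i2 by (simp add: c_def algebra_simps power2_eq_square add_divide_distrib)
  also have "e * (ln u - ln v) + e^2 * c = e * (e * c - d)" by (simp add: d_def algebra_simps power2_eq_square)
  also have "\<dots> < 0" using e d by (intro mult_pos_neg) auto
  finally show False by simp
qed

lemma ratio_eq:
  assumes p: "p \<in> S" and q: "q \<in> S" and e0: "p 0 = q 0" and eT: "p T = q T"
    and Pp: "0 < P p" and Pq: "0 < P q"
  shows "P p / R p = P q / R q"
proof -
  have "R p \<noteq> 0" "R q \<noteq> 0" using support p q Pp Pq by auto
  then show ?thesis using ratio_not_less[OF p q e0 eT _ Pp Pq] ratio_not_less[OF q p e0[symmetric] eT[symmetric] _ Pq Pp]
    by linarith
qed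

lemma pos_transfer:
  assumes p: "p \<in> S" and q: "q \<in> S" and e0: "p 0 = q 0" and eT: "p T = q T"
    and Rp: "R p \<noteq> 0" and Pq: "0 < P q"
  shows "0 < P p"
proof (rule ccontr)
  assume "\<not> 0 < P p"
  then have Pp: "P p = 0" using P_nonneg[OF p] by simp
  have pq: "p \<noteq> q" using Pp Pq by auto
  have Rq: "R q \<noteq> 0" using support q Pq by auto
  have rp: "0 < R p" "0 < R q" using R_pos p q Rp Rq by auto
  define v where "v = P q / R q"
  have v: "0 < v" using Pq rp by (simp add: v_def)
  define e where "e = min (P q / 2) (R p * v / 2)"
  have e: "0 < e" "e < P q" "e \<le> P q / 2" "e \<le> R p * v / 2" using Pq v rp
    by (auto simp: e_def min_def field_simps)
  have i2: "hh (P q - e) (R q) \<le> hh (P q) (R q) + (-e) * (ln v + 1) + (-e)^2 / P q"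
    using key_ineq[OF Pq rp(2), of "-e"] e Pq by (simp add: hh_def v_def)
  have "hh (P p) (R p) + hh (P q) (R q) \<le> hh (P p + e) (R p) + hh (P q - e) (R q)"
    using opt_ineq[OF p q pq e0 eT Rp Rq] e Pp by simp
  then have "0 \<le> e * ln (e / R p) - e * (ln v + 1) + e^2 / P q"
    using i2 e Pp by (simp add: hh_def)
  also have "\<dots> = e * (ln (e / R p) - ln v - 1 + e / P q)"
    by (simp add: algebra_simps power2_eq_square)
  also have "\<dots> < 0"
  proof (intro mult_pos_neg e(1))
    have "e / R p \<le> v / 2" using e rp by (simp add: field_simps)
    then have "ln (e / R p) \<le> ln (v / 2)" using e rp by (intro ln_mono) auto
    also have "ln (v / 2) = ln v - ln 2" using v by (simp add: ln_div)
    finally have "ln (e / R p) \<le> ln v - ln 2" .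
    moreover have "e / P q \<le> 1 / 2" using e Pq by (simp add: field_simps)
    moreover have "0 < ln (2::real)" by simp
    ultimately show "ln (e / R p) - ln v - 1 + e / P q < 0" by linarith
  qed
  finally show False by simp
qed

end


definition cons :: "nat \<Rightarrow> (nat \<Rightarrow> nat) \<Rightarrow> nat \<Rightarrow> nat" where
  "cons x v = (\<lambda>t. if t = 0 then x else v (t - 1))"

lemma cons_0[simp]: "cons x v 0 = x" and cons_Suc[simp]: "cons x v (Suc t) = v t"
  by (auto simp: cons_def)

lemma walk_cons: "walk n K L v \<Longrightarrow> x < n \<Longrightarrow> 0 < K x (v 0) \<Longrightarrow> walk n K (Suc L) (cons x v)"
  unfolding walk_def by (auto simp: cons_def less_Suc_eq_0_disj le_Suc_eq)

lemma wp_cons: "wp K (Suc L) (cons x v) = K x (v 0) * wp K L v"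
  unfolding wp_def prod.lessThan_Suc_shift by simp

lemma walk_range: "walk n K L w \<Longrightarrow> t \<le> L \<Longrightarrow> w t < n"
  by (auto simp: walk_def)

lemma wp_pos_walk:
  assumes "0 < wp K L w" "\<forall>t\<le>L. w t < n" "\<forall>i<n. \<forall>j<n. 0 \<le> K i j"
  shows "walk n K L w"
proof -
  have "\<forall>t<L. K (w t) (w (Suc t)) \<noteq> 0"
  proof (intro allI impI notI)
    fix t assume "t < L" "K (w t) (w (Suc t)) = 0"
    then have "wp K L w = 0" unfolding wp_def by (intro prod_zero) auto
    then show False using assms(1) by simp
  qed
  then show ?thesis using assms(2,3) unfolding walk_def
    by (metis Suc_leI less_imp_le order_le_neq_trans)
qed

lemma walk_restrict: "walk n K T (restrict w {0..T}) = walk n K T w"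
  by (rule walk_cong) auto

context sb begin

lemma Tr_walk_P:
  assumes "walk n Tr T w" "0 < nu (w 0)"
  shows "0 < P (restrict w {0..T})"
proof -
  have "0 < wp Tr T w" by (rule wp_pos[OF assms(1)]) auto
  then show ?thesis using P_restrict[of w] assms walk_range[OF assms(1)] by simp
qed

lemma P_pos_walk:
  assumes "x \<in> S" "0 < P x"
  shows "walk n Tr T x" "0 < nu (x 0)"
proof -
  have x0: "x 0 < n" using S_range[OF assms(1)] by simp
  have "nu (x 0) * wp Tr T x > 0" using assms P_eq by simp
  moreover have "0 \<le> nu (x 0)" "0 \<le> wp Tr T x"
    using nu_nonneg[OF x0] S_range[OF assms(1)] Tr_nonneg by (auto intro!: wp_nonneg)
  ultimately have "0 < nu (x 0)" "0 < wp Tr T x" by (auto simp: zero_less_mult_iff)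
  then show "walk n Tr T x" "0 < nu (x 0)" using S_range[OF assms(1)] Tr_nonneg
    by (auto intro!: wp_pos_walk)
qed

lemma P_restrict_walk:
  assumes "walk n K T w" "0 < P (restrict w {0..T})"
  shows "walk n Tr T w" "0 < nu (w 0)"
  using P_pos_walk[OF walk_in_S[OF assms(1)] assms(2)]
  by (auto simp: walk_restrict)

lemma from_start:
  assumes q: "q \<in> S" "0 < P q" and z: "z < n"
  shows "\<exists>w. walk n Tr N w \<and> w 0 = q 0 \<and> w N = z"
proof -
  have a: "q 0 < n" "q T < n" using S_range[OF q(1)] by auto
  obtain u where u: "walk n m N u" "u 0 = q 0" "u N = z" using walkN[OF a(1) z] by blast
  obtain v where v: "walk n m N v" "v 0 = z" "v N = q T" using walkN[OF z a(2)] by blast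
  define w where "w = cat u N v"
  have w: "walk n m T w" using walk_cat[OF u(1) v(1)] u v by (simp add: w_def mult_2)
  have we: "w 0 = q 0" "w T = q T" using u v by (auto simp: w_def cat_def mult_2)
  have "R (restrict w {0..T}) \<noteq> 0" using R_pos_iff[OF walk_in_S[OF w]] w
    by (auto simp: walk_restrict)
  then have "0 < P (restrict w {0..T})"
    using pos_transfer[OF walk_in_S[OF w] q(1)] q(2) we by auto
  from P_restrict_walk[OF w this] have "walk n Tr N w" by (auto intro: walk_mono)
  then show ?thesis using u by (intro exI[of _ w]) (auto simp: w_def cat_def)
qed

lemma exists_pos_marg:
  assumes "t = 0 \<or> t = T" "s < n" "0 < nu s"
  shows "\<exists>q\<in>S. q t = s \<and> 0 < P q"
proof (rule ccontr)
  assume "\<not> ?thesis"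
  then have "\<forall>q\<in>{x\<in>S. x t = s}. P q \<le> 0" by auto
  then have "marginal n T P t s \<le> 0" unfolding marginal_def by (intro sum_nonpos) auto
  moreover have "marginal n T P t s = nu s" using bridge assms
    by (auto simp: is_schroedinger_bridge_def bridge_admissible_def)
  ultimately show False using assms by simp
qed

lemma exists_pos: "\<exists>q\<in>S. 0 < P q"
proof (rule ccontr)
  assume "\<not> ?thesis"
  then have "sum P S \<le> 0" by (intro sum_nonpos) auto
  moreover have "sum P S = 1" using bridge
    by (auto simp: is_schroedinger_bridge_def bridge_admissible_def prob_dist_on_def)
  ultimately show False by simp
qed

lemma marg_ge: "x \<in> S \<Longrightarrow> P x \<le> marginal n T P T (x T)"
  unfolding marginal_def using finite_S P_nonneg
  by (intro member_le_sum) auto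

lemma nu_pos: "c < n \<Longrightarrow> 0 < nu c"
proof -
  assume c: "c < n"
  obtain q where q: "q \<in> S" "0 < P q" using exists_pos by blast
  have a: "q 0 < n" "0 < nu (q 0)" using S_range[OF q(1)] P_pos_walk[OF q] by auto
  obtain r where r: "r \<in> S" "r T = q 0" "0 < P r" using exists_pos_marg[of T "q 0"] a by auto
  obtain al where al: "walk n Tr N al" "al 0 = r 0" "al N = q 0" using from_start[OF r(1) r(3) a(1)] by blast
  obtain be where be: "walk n Tr N be" "be 0 = q 0" "be N = c" using from_start[OF q c] by blast
  define w where "w = cat al N be"
  have w: "walk n Tr T w" using walk_cat[OF al(1) be(1)] al be by (simp add: w_def mult_2)
  have we: "w 0 = r 0" "w T = c" using al be by (auto simp: w_def cat_def mult_2)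
  have "0 < P (restrict w {0..T})" using Tr_walk_P[OF w] we P_pos_walk[OF r(1) r(3)] by simp
  also have "\<dots> \<le> marginal n T P T c" using marg_ge[OF walk_in_S[OF w]] we by simp
  also have "\<dots> = nu c" using bridge c by (auto simp: is_schroedinger_bridge_def bridge_admissible_def)
  finally show ?thesis .
qed

lemma Tr_walkN: "s < n \<Longrightarrow> z < n \<Longrightarrow> \<exists>w. walk n Tr N w \<and> w 0 = s \<and> w N = z"
proof -
  assume sz: "s < n" "z < n"
  obtain q where "q \<in> S" "q 0 = s" "0 < P q" using exists_pos_marg[of 0 s] nu_pos sz by auto
  then show ?thesis using from_start[of q z] sz by auto
qed

lemma Tr_walkT: "s < n \<Longrightarrow> z < n \<Longrightarrow> \<exists>w. walk n Tr T w \<and> w 0 = s \<and> w T = z"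
proof -
  assume sz: "s < n" "z < n"
  obtain u where u: "walk n Tr N u" "u 0 = s" "u N = 0" using Tr_walkN sz n_pos by blast
  obtain v where v: "walk n Tr N v" "v 0 = 0" "v N = z" using Tr_walkN sz n_pos by blast
  show ?thesis using walk_cat[OF u(1) v(1)] u v
    by (intro exI[of _ "cat u N v"]) (auto simp: mult_2 cat_def)
qed

lemma all_walks_pos: "walk n m T w \<Longrightarrow> 0 < P (restrict w {0..T})"
proof -
  assume w: "walk n m T w"
  obtain v where v: "walk n Tr T v" "v 0 = w 0" "v T = w T"
    using Tr_walkT walk_range[OF w] by (meson le_refl zero_le)
  have "0 < P (restrict v {0..T})" using Tr_walk_P[OF v(1)] nu_pos walk_range[OF w] v by simp
  moreover have "R (restrict w {0..T}) \<noteq> 0" using R_pos_iff[OF walk_in_S[OF w]] w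
    by (auto simp: walk_restrict)
  ultimately show ?thesis using pos_transfer[OF walk_in_S[OF w] walk_in_S[OF v(1)]] v by auto
qed

lemma Tm_pos: "x < n \<Longrightarrow> y < n \<Longrightarrow> 0 < m x y \<Longrightarrow> 0 < Tr x y"
proof -
  assume xy: "x < n" "y < n" "0 < m x y"
  obtain v where v: "walk n m T v" "v 0 = y" using walk2N[OF xy(2) n_pos] by blast
  have w: "walk n m T (cons x v)"
    using walk_cons[OF walk_mono[OF v(1), of "T - 1"] xy(1)] v xy N by simp
  have "walk n Tr T (cons x v)" using P_restrict_walk(1)[OF w all_walks_pos[OF w]] .
  moreover have "0 < T" using N by simp
  ultimately have "0 < Tr (cons x v 0) (cons x v (Suc 0))" unfolding walk_def by blast
  then show ?thesis using v(2) by simp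
qed

lemma Tm_zero: "x < n \<Longrightarrow> y < n \<Longrightarrow> m x y = 0 \<Longrightarrow> Tr x y = 0"
proof (rule ccontr)
  assume xy: "x < n" "y < n" "m x y = 0" "Tr x y \<noteq> 0"
  then have Tp: "0 < Tr x y" using Tr_nonneg[OF xy(1,2)] by simp
  obtain v where v: "walk n Tr T v" "v 0 = y" using Tr_walkT[OF xy(2) n_pos] by blast
  have w: "walk n Tr T (cons x v)"
    using walk_cons[OF walk_mono[OF v(1), of "T - 1"] xy(1)] v Tp N by simp
  have "0 < P (restrict (cons x v) {0..T})" using Tr_walk_P[OF w] nu_pos xy by simp
  then have "R (restrict (cons x v) {0..T}) \<noteq> 0" using support walk_in_S[OF w] by auto
  then have "walk n m T (restrict (cons x v) {0..T})"
    using R_pos_iff[OF walk_in_S[OF w]] R_pos[OF walk_in_S[OF w]] by auto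
  moreover have "0 < T" using N by simp
  ultimately have "0 < m (restrict (cons x v) {0..T} 0) (restrict (cons x v) {0..T} (Suc 0))"
    unfolding walk_def by blast
  moreover have "Suc 0 \<le> T" using N by simp
  ultimately have "0 < m x y" using v(2) by simp
  then show False using xy by simp
qed

end


lemma walk_last: "walk n K L w \<Longrightarrow> 0 < L \<Longrightarrow> w (L - 1) < n \<and> 0 < K (w (L - 1)) (w L)"
proof -
  assume w: "walk n K L w" and L: "0 < L"
  have "L - 1 < L" "Suc (L - 1) = L" using L by auto
  then show ?thesis using w unfolding walk_def by (metis less_imp_le)
qed

lemma walk_first: "walk n K L w \<Longrightarrow> 0 < L \<Longrightarrow> 0 < K (w 0) (w (Suc 0))"
  unfolding walk_def by blast

lemma cons_pos: "0 < t \<Longrightarrow> cons x v t = v (t - 1)"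
  by (simp add: cons_def)

context sb begin

definition K :: "nat \<Rightarrow> nat \<Rightarrow> real" where "K x y = Tr x y / m x y"

lemma K_pos: "x < n \<Longrightarrow> y < n \<Longrightarrow> 0 < m x y \<Longrightarrow> 0 < K x y"
  using Tm_pos by (simp add: K_def)

lemma wpK_pos: "walk n m L w \<Longrightarrow> 0 < wp K L w"
  by (rule wp_pos) (auto intro: K_pos)

lemma wpm_pos: "walk n m L w \<Longrightarrow> 0 < wp m L w"
  by (rule wp_pos) auto

lemma wpK_eq: "wp K L w = wp Tr L w / wp m L w"
  unfolding wp_def K_def by (simp add: prod_dividef)

lemma prodT:
  assumes u: "walk n m T u" and w: "walk n m T w" and e: "u 0 = w 0" "u T = w T"
  shows "wp K T u = wp K T w"
proof -
  have ru: "restrict u {0..T} \<in> S" and rw: "restrict w {0..T} \<in> S" using walk_in_S u w by auto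
  have "P (restrict u {0..T}) / R (restrict u {0..T}) = P (restrict w {0..T}) / R (restrict w {0..T})"
    using ratio_eq[OF ru rw] e all_walks_pos[OF u] all_walks_pos[OF w] by simp
  moreover have "P (restrict u {0..T}) = nu (u 0) * wp Tr T u" using P_restrict walk_range[OF u] by simp
  moreover have "P (restrict w {0..T}) = nu (w 0) * wp Tr T w" using P_restrict walk_range[OF w] by simp
  moreover have "R (restrict u {0..T}) = mu0 (u 0) * wp m T u" using R_restrict[of u] R_eq[of u] by simp
  moreover have "R (restrict w {0..T}) = mu0 (w 0) * wp m T w" using R_restrict[of w] R_eq[of w] by simp
  ultimately have "nu (u 0) / mu0 (u 0) * wp K T u = nu (u 0) / mu0 (u 0) * wp K T w"
    using e by (simp add: wpK_eq)
  moreover have "nu (u 0) \<noteq> 0" "mu0 (u 0) \<noteq> 0" using nu_pos mu0_pos walk_range[OF u, of 0]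
    by (auto simp: less_imp_neq[symmetric])
  ultimately show ?thesis by simp
qed

definition wN :: "nat \<Rightarrow> nat \<Rightarrow> nat \<Rightarrow> nat" where
  "wN x y = (SOME w. walk n m N w \<and> w 0 = x \<and> w N = y)"

lemma wN: "x < n \<Longrightarrow> y < n \<Longrightarrow> walk n m N (wN x y) \<and> wN x y 0 = x \<and> wN x y N = y"
  unfolding wN_def using walkN by (rule someI_ex) auto

definition PN :: "nat \<Rightarrow> nat \<Rightarrow> real" where "PN x y = wp K N (wN x y)"

lemma lenN:
  assumes u: "walk n m N u" "u 0 = x" "u N = y"
  shows "wp K N u = PN x y"
proof -
  have xy: "x < n" "y < n" using walk_range[OF u(1)] u by auto
  define v where "v = wN x y"
  have v: "walk n m N v" "v 0 = x" "v N = y" using wN[OF xy] by (auto simp: v_def)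
  define al where "al = wN 0 x"
  have al: "walk n m N al" "al 0 = 0" "al N = x" using wN[OF n_pos xy(1)] by (auto simp: al_def)
  have c1: "walk n m T (cat al N u)" using walk_cat[OF al(1) u(1)] al u by (simp add: mult_2)
  have c2: "walk n m T (cat al N v)" using walk_cat[OF al(1) v(1)] al v by (simp add: mult_2)
  have "wp K T (cat al N u) = wp K T (cat al N v)"
    using prodT[OF c1 c2] al u v by (simp add: cat_def mult_2)
  then have "wp K N al * wp K N u = wp K N al * wp K N v"
    using wp_cat[of al N u K N] wp_cat[of al N v K N] al u v by (simp add: mult_2)
  moreover have "0 < wp K N al" using wpK_pos[OF al(1)] .
  ultimately show ?thesis by (simp add: PN_def v_def)
qed

definition p :: "nat \<Rightarrow> real" where "p z = PN 0 z"
definition kap :: real where "kap = p 0"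

lemma PN_pos: "x < n \<Longrightarrow> y < n \<Longrightarrow> 0 < PN x y"
  unfolding PN_def using wN wpK_pos by blast

lemma p_pos: "z < n \<Longrightarrow> 0 < p z"
  using PN_pos n_pos by (simp add: p_def)

lemma kap_pos: "0 < kap" using p_pos n_pos by (simp add: kap_def)

lemma PN_formula:
  assumes "z < n" "y < n"
  shows "PN z y = kap * p y / p z"
proof -
  define a where "a = wN 0 z"
  define b where "b = wN z y"
  define c where "c = wN 0 0"
  define d where "d = wN 0 y"
  have a: "walk n m N a" "a 0 = 0" "a N = z" using wN[OF n_pos assms(1)] by (auto simp: a_def)
  have b: "walk n m N b" "b 0 = z" "b N = y" using wN[OF assms] by (auto simp: b_def)
  have c: "walk n m N c" "c 0 = 0" "c N = 0" using wN[OF n_pos n_pos] by (auto simp: c_def)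
  have d: "walk n m N d" "d 0 = 0" "d N = y" using wN[OF n_pos assms(2)] by (auto simp: d_def)
  have c1: "walk n m T (cat a N b)" using walk_cat[OF a(1) b(1)] a b by (simp add: mult_2)
  have c2: "walk n m T (cat c N d)" using walk_cat[OF c(1) d(1)] c d by (simp add: mult_2)
  have "wp K T (cat a N b) = wp K T (cat c N d)"
    using prodT[OF c1 c2] a b c d by (simp add: cat_def mult_2)
  then have "wp K N a * wp K N b = wp K N c * wp K N d"
    using wp_cat[of a N b K N] wp_cat[of c N d K N] a b c d by (simp add: mult_2)
  then have "p z * PN z y = kap * p y"
    by (simp add: p_def kap_def PN_def a_def b_def c_def d_def)
  then show ?thesis using p_pos[OF assms(1)] by (simp add: field_simps)
qed

lemma lenN_formula: "walk n m N u \<Longrightarrow> wp K N u = kap * p (u N) / p (u 0)"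
  using lenN[of u "u 0" "u N"] PN_formula walk_range[of n m N u] by auto

definition beta :: "nat \<Rightarrow> real" where
  "beta y = kap * p (wN y 0 (N - 1)) / wp K (N - 1) (wN y 0)"

lemma K_beta:
  assumes xy: "x < n" "y < n" "0 < m x y"
  shows "K x y = beta y / p x"
proof -
  define s where "s = wN y 0"
  have s: "walk n m N s" "s 0 = y" using wN[OF xy(2) n_pos] by (auto simp: s_def)
  have s1: "walk n m (N - 1) s" using walk_mono[OF s(1)] by simp
  have w: "walk n m N (cons x s)" using walk_cons[OF s1 xy(1)] s xy N by simp
  have "K x y * wp K (N - 1) s = kap * p (s (N - 1)) / p x"
    using lenN_formula[OF w] wp_cons[of K "N - 1" x s] s N by (simp add: cons_pos)
  moreover have "0 < wp K (N - 1) s" using wpK_pos[OF s1] .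
  ultimately show ?thesis using p_pos[OF xy(1)]
    by (simp add: beta_def s_def field_simps)
qed

lemma B_const:
  assumes y: "y < n" and z: "z < n"
  shows "beta z / p z = beta y / p y"
proof -
  define a where "a = wN 0 y"
  have a: "walk n m N a" "a 0 = 0" "a N = y" using wN[OF n_pos y] by (auto simp: a_def)
  define x0 where "x0 = a (N - 1)"
  have x0: "x0 < n" "0 < m x0 y" using walk_last[OF a(1)] a N unfolding x0_def by auto
  define u where "u = wN y z"
  have u: "walk n m N u" "u 0 = y" "u N = z" using wN[OF y z] by (auto simp: u_def)
  have w: "walk n m (Suc N) (cons x0 u)" using walk_cons[OF u(1) x0(1)] u x0 by simp
  have wN': "walk n m N (cons x0 u)" using walk_mono[OF w] by simp
  have un1: "u (N - 1) < n" "0 < m (u (N - 1)) z" using walk_last[OF u(1)] u N by auto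
  have e1: "wp K (Suc N) (cons x0 u) = K x0 y * wp K N u" using wp_cons[of K N x0 u] u by simp
  have e2: "wp K (Suc N) (cons x0 u) = wp K N (cons x0 u) * K (u (N - 1)) z"
    using u N by (simp add: wp_def cons_pos)
  have "cons x0 u N = u (N - 1)" using N by (simp add: cons_pos)
  then have e3: "wp K N (cons x0 u) = kap * p (u (N - 1)) / p x0" using lenN_formula[OF wN'] by simp
  have e4: "wp K N u = kap * p z / p y" using lenN_formula[OF u(1)] u by simp
  have l: "wp K (Suc N) (cons x0 u) = beta y / p x0 * (kap * p z / p y)"
    by (simp only: e1 e4 K_beta[OF x0(1) y x0(2)])
  have r: "wp K (Suc N) (cons x0 u) = kap * p (u (N - 1)) / p x0 * (beta z / p (u (N - 1)))"
    by (simp only: e2 e3 K_beta[OF un1(1) z un1(2)])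
  have eq: "beta y / p x0 * (kap * p z / p y) = kap * p (u (N - 1)) / p x0 * (beta z / p (u (N - 1)))"
    using l r by (rule trans[OF sym])
  have pos: "p (u (N - 1)) \<noteq> 0" "p x0 \<noteq> 0" "p y \<noteq> 0" "p z \<noteq> 0" "kap \<noteq> 0"
    using p_pos x0(1) un1(1) y z kap_pos by (auto simp: less_imp_neq[symmetric])
  have "kap * p (u (N - 1)) / p x0 * (beta z / p (u (N - 1))) = kap * beta z / p x0"
    using pos by (simp add: field_simps)
  with eq have "beta y / p x0 * (kap * p z / p y) = kap * beta z / p x0" by simp
  then have "beta y * p z / p y = beta z" using pos by (simp add: field_simps)
  then show ?thesis using pos by (simp add: field_simps)
qed

definition cc :: real where "cc = beta 0 / p 0"

lemma K_gauge: "x < n \<Longrightarrow> y < n \<Longrightarrow> 0 < m x y \<Longrightarrow> K x y = cc * p y / p x"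
proof -
  assume xy: "x < n" "y < n" "0 < m x y"
  have "beta y / p y = cc" using B_const[OF n_pos xy(2)] by (simp add: cc_def)
  then have "beta y = cc * p y" using p_pos[OF xy(2)] by (simp add: field_simps)
  then show ?thesis using K_beta[OF xy] by simp
qed

lemma Tr_gauge: "x < n \<Longrightarrow> y < n \<Longrightarrow> Tr x y = m x y * cc * p y / p x"
proof -
  assume xy: "x < n" "y < n"
  show ?thesis
  proof (cases "m x y = 0")
    case True then show ?thesis using Tm_zero xy by simp
  next
    case False
    then have "0 < m x y" using m_nonneg xy by (simp add: order_le_neq_trans)
    then show ?thesis using K_gauge[OF xy] by (simp add: K_def field_simps)
  qed
qed

lemma cc_pos: "0 < cc"
proof -
  have w: "walk n m N (wN 0 0)" "wN 0 0 0 = 0" using wN[OF n_pos n_pos] by auto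
  obtain y where y: "y < n" "0 < m 0 y"
    using walk_first[OF w(1)] walk_range[OF w(1), of "Suc 0"] w(2) N by auto
  have "cc = K 0 y * p 0 / p y" using K_gauge[OF n_pos y(1) y(2)] p_pos[OF n_pos] p_pos[OF y(1)]
    by (simp add: field_simps)
  then show ?thesis using K_pos[OF n_pos y(1) y(2)] p_pos[OF n_pos] p_pos[OF y(1)] by simp
qed

end


fun push :: "nat \<Rightarrow> (nat \<Rightarrow> nat \<Rightarrow> real) \<Rightarrow> (nat \<Rightarrow> real) \<Rightarrow> nat \<Rightarrow> nat \<Rightarrow> real" where
  "push n A f 0 = f"
| "push n A f (Suc t) = (\<lambda>b. \<Sum>c<n. push n A f t c * A c b)"

lemma paths_Suc: "paths n (Suc L) = (\<lambda>(y, g). g(Suc L := y)) ` ({..<n} \<times> paths n L)"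
proof -
  have "{0..Suc L} = insert (Suc L) {0..L}" by auto
  then show ?thesis unfolding paths_def by (simp add: PiE_insert_eq)
qed

lemma paths_arb: "g \<in> paths n L \<Longrightarrow> t \<notin> {0..L} \<Longrightarrow> g t = undefined"
  unfolding paths_def by (rule PiE_arb)

lemma paths_Suc_inj: "inj_on (\<lambda>(y, g). g(Suc L := y)) ({..<n} \<times> paths n L)"
  unfolding inj_on_def
proof (intro ballI impI)
  fix z z' :: "nat \<times> (nat \<Rightarrow> nat)"
  assume z: "z \<in> {..<n} \<times> paths n L" and z': "z' \<in> {..<n} \<times> paths n L"
    and eq0: "(case z of (y, g) \<Rightarrow> g(Suc L := y)) = (case z' of (y, g) \<Rightarrow> g(Suc L := y))"
  obtain y g where zz: "z = (y, g)" by (cases z)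
  obtain y' g' where zz': "z' = (y', g')" by (cases z')
  have g: "g \<in> paths n L" and g': "g' \<in> paths n L" using z z' zz zz' by auto
  have eq: "g(Suc L := y) = g'(Suc L := y')" using eq0 zz zz' by simp
  have "y = y'" using fun_cong[OF eq, of "Suc L"] by simp
  moreover have "g t = g' t" for t
  proof (cases "t = Suc L")
    case True
    then have "t \<notin> {0..L}" by simp
    then show ?thesis using paths_arb[OF g] paths_arb[OF g'] by simp
  next
    case False then show ?thesis using fun_cong[OF eq, of t] by simp
  qed
  ultimately show "z = z'" using zz zz' by auto
qed

lemma paths_range: "x \<in> paths n L \<Longrightarrow> t \<le> L \<Longrightarrow> x t < n"
  unfolding paths_def by (auto simp: PiE_iff)

lemma paths_0: "b < n \<Longrightarrow> {x \<in> paths n 0. x 0 = b} = {restrict (\<lambda>_::nat. b) {0..0::nat}}"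
proof (intro equalityI subsetI)
  fix x assume b: "b < n" and x: "x \<in> {x \<in> paths n 0. x 0 = b}"
  have "x t = restrict (\<lambda>_::nat. b) {0..0::nat} t" for t
  proof (cases "t = 0")
    case True then show ?thesis using x by simp
  next
    case False
    then have "t \<notin> {0..0}" by simp
    then show ?thesis using paths_arb[of x n 0 t] x by simp
  qed
  then show "x \<in> {restrict (\<lambda>_::nat. b) {0..0::nat}}" by auto
next
  fix x assume b: "b < n" and x: "x \<in> {restrict (\<lambda>_::nat. b) {0..0::nat}}"
  have "restrict (\<lambda>_::nat. b) {0..0::nat} \<in> paths n 0" unfolding paths_def using b
    by (simp add: restrict_PiE_iff)
  then show "x \<in> {x \<in> paths n 0. x 0 = b}" using x by simp
qed

lemma path_sum:
  "b < n \<Longrightarrow> (\<Sum>x\<in>{x\<in>paths n L. x L = b}. f (x 0) * wp A L x) = push n A f L b"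
proof (induction L arbitrary: b)
  case 0
  then show ?case by (simp add: paths_0 wp_def)
next
  case (Suc L)
  let ?h = "\<lambda>(y, g). (g :: nat \<Rightarrow> nat)(Suc L := y)"
  let ?F = "\<lambda>x. f (x 0) * wp A (Suc L) x"
  have fin: "finite (paths n L)" unfolding paths_def by (intro finite_PiE) auto
  have "{x\<in>paths n (Suc L). x (Suc L) = b} = ?h ` ({b} \<times> paths n L)"
    unfolding paths_Suc using Suc.prems by auto
  moreover have inj: "inj_on ?h ({b} \<times> paths n L)"
    using inj_on_subset[OF paths_Suc_inj[of L n], of "{b} \<times> paths n L"] Suc.prems by auto
  ultimately have "(\<Sum>x\<in>{x\<in>paths n (Suc L). x (Suc L) = b}. ?F x) = (\<Sum>z\<in>{b} \<times> paths n L. ?F (?h z))"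
    by (simp only: sum.reindex[OF inj, unfolded comp_def])
  also have "\<dots> = (\<Sum>g\<in>paths n L. ?F (g(Suc L := b)))"
    by (rule sum.reindex_bij_witness[of _ "\<lambda>g. (b, g)" "\<lambda>z. snd z"]) auto
  also have "\<dots> = (\<Sum>g\<in>paths n L. f (g 0) * wp A L g * A (g L) b)"
  proof (intro sum.cong refl)
    fix g :: "nat \<Rightarrow> nat"
    have "wp A L (g(Suc L := b)) = wp A L g" by (intro wp_cong) auto
    then show "?F (g(Suc L := b)) = f (g 0) * wp A L g * A (g L) b"
      by (simp add: wp_def)
  qed
  also have "\<dots> = (\<Sum>c<n. \<Sum>g\<in>{g\<in>paths n L. g L = c}. f (g 0) * wp A L g * A (g L) b)"
    using fin paths_range by (intro sum.group[symmetric]) auto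
  also have "\<dots> = (\<Sum>c<n. (\<Sum>g\<in>{g\<in>paths n L. g L = c}. f (g 0) * wp A L g) * A c b)"
    by (intro sum.cong refl) (simp add: sum_distrib_right)
  also have "\<dots> = (\<Sum>c<n. push n A f L c * A c b)"
    using Suc.IH by simp
  finally show ?case by simp
qed

lemma push_lin: "push n A (\<lambda>c. f c - s * g c) t b = push n A f t b - s * push n A g t b"
proof (induction t arbitrary: b)
  case 0 then show ?case by simp
next
  case (Suc t)
  have "push n A (\<lambda>c. f c - s * g c) (Suc t) b = (\<Sum>c<n. (push n A f t c - s * push n A g t c) * A c b)"
    using Suc.IH by simp
  also have "\<dots> = push n A f (Suc t) b - s * push n A g (Suc t) b"
    by (simp add: left_diff_distrib sum_subtractf sum_distrib_left mult.assoc)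
  finally show ?case .
qed

lemma push_nonneg: "(\<forall>c<n. 0 \<le> f c) \<Longrightarrow> (\<forall>i<n. \<forall>j<n. 0 \<le> A i j) \<Longrightarrow> b < n \<Longrightarrow> 0 \<le> push n A f t b"
  by (induction t arbitrary: b) (auto intro!: sum_nonneg)

lemma push_walk:
  assumes "\<forall>c<n. 0 \<le> f c" "\<forall>i<n. \<forall>j<n. 0 \<le> A i j" "walk n K L w"
  shows "t \<le> L \<Longrightarrow> f (w 0) * wp A t w \<le> push n A f t (w t)"
proof (induction t)
  case 0 then show ?case by (simp add: wp_def)
next
  case (Suc t)
  have r: "w t < n" "w (Suc t) < n" using assms(3) Suc.prems walk_range by auto
  have "f (w 0) * wp A (Suc t) w = f (w 0) * wp A t w * A (w t) (w (Suc t))"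
    by (simp add: wp_def)
  also have "\<dots> \<le> push n A f t (w t) * A (w t) (w (Suc t))"
    using Suc r assms by (intro mult_right_mono) auto
  also have "\<dots> \<le> (\<Sum>c<n. push n A f t c * A c (w (Suc t)))"
    using r assms push_nonneg[OF assms(1,2)]
    by (intro member_le_sum[where f = "\<lambda>c. push n A f t c * A c (w (Suc t))"]) auto
  finally show ?case by simp
qed



lemma ex_min_idx: "(0::nat) < n \<Longrightarrow> \<exists>i0<n. \<forall>i<n. (r i0 :: real) \<le> r i"
proof -
  assume n: "0 < n"
  have ne: "r ` {..<n} \<noteq> {}" using n by auto
  obtain i0 where i0: "i0 < n" "Min (r ` {..<n}) = r i0" using Min_in[OF _ ne] by auto
  then show ?thesis using Min_le[of "r ` {..<n}"] by (intro exI[of _ i0]) auto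
qed

context sb begin

definition lam :: real where "lam = spectral_radius (map_mat complex_of_real M)"

lemma PR: "i < n \<Longrightarrow> (\<Sum>j<n. m i j * phi $ j) = lam * phi $ i"
proof -
  assume i: "i < n"
  have "(M *\<^sub>v phi) $ i = (lam \<cdot>\<^sub>v phi) $ i" using phi_right by (simp add: lam_def)
  moreover have "(M *\<^sub>v phi) $ i = (\<Sum>j<n. m i j * phi $ j)"
    using i M_dim phi_dim by (simp add: scalar_prod_def m_def lessThan_atLeast0)
  moreover have "(lam \<cdot>\<^sub>v phi) $ i = lam * phi $ i" using i phi_dim by simp
  ultimately show ?thesis by simp
qed

lemma PL: "i < n \<Longrightarrow> (\<Sum>j<n. m j i * phihat $ j) = lam * phihat $ i"
proof -
  assume i: "i < n"
  have "(transpose_mat M *\<^sub>v phihat) $ i = (lam \<cdot>\<^sub>v phihat) $ i" using phihat_left by (simp add: lam_def)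
  moreover have "(transpose_mat M *\<^sub>v phihat) $ i = (\<Sum>j<n. m j i * phihat $ j)"
    using i M_dim phihat_dim by (simp add: scalar_prod_def m_def lessThan_atLeast0)
  moreover have "(lam \<cdot>\<^sub>v phihat) $ i = lam * phihat $ i" using i phihat_dim by simp
  ultimately show ?thesis by simp
qed

lemma lam_nonneg: "0 \<le> lam"
proof -
  have "0 \<le> (\<Sum>j<n. m 0 j * phi $ j)"
  proof (intro sum_nonneg)
    fix j assume "j \<in> {..<n}"
    then have "0 \<le> m 0 j" "0 \<le> phi $ j" using m_nonneg[OF n_pos, of j] phi_pos by (auto simp: less_imp_le)
    then show "0 \<le> m 0 j * phi $ j" by simp
  qed
  then have "0 \<le> lam * phi $ 0" using PR[OF n_pos] by simp
  moreover have "0 < phi $ 0" using phi_pos n_pos by simp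
  ultimately show ?thesis by (simp add: zero_le_mult_iff)
qed

lemma eig_walk:
  assumes dn: "\<forall>i<n. 0 \<le> d i" and ev: "\<forall>i<n. (\<Sum>j<n. m i j * d j) = lam * d i"
    and w: "walk n m L w"
  shows "t \<le> L \<Longrightarrow> wp m t w * d (w t) \<le> lam ^ t * d (w 0)"
proof (induction t)
  case 0 then show ?case by (simp add: wp_def)
next
  case (Suc t)
  have r: "w t < n" "w (Suc t) < n" using w Suc.prems walk_range by auto
  have wpn: "0 \<le> wp m t w" using m_nonneg walk_range[OF w] Suc.prems by (intro wp_nonneg) auto
  have "m (w t) (w (Suc t)) * d (w (Suc t)) \<le> (\<Sum>j<n. m (w t) j * d j)"
    using r dn m_nonneg by (intro member_le_sum[where f = "\<lambda>j. m (w t) j * d j"]) auto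
  also have "\<dots> = lam * d (w t)" using ev r by simp
  finally have a: "m (w t) (w (Suc t)) * d (w (Suc t)) \<le> lam * d (w t)" .
  have "wp m (Suc t) w * d (w (Suc t)) = wp m t w * (m (w t) (w (Suc t)) * d (w (Suc t)))"
    by (simp add: wp_def mult.assoc)
  also have "\<dots> \<le> wp m t w * (lam * d (w t))" using a wpn by (intro mult_left_mono)
  also have "\<dots> = lam * (wp m t w * d (w t))" by simp
  also have "\<dots> \<le> lam * (lam ^ t * d (w 0))" using Suc lam_nonneg by (intro mult_left_mono) auto
  finally show ?case by simp
qed

lemma right_eig:
  assumes vpos: "\<forall>i<n. 0 < v i" and ev: "\<forall>i<n. (\<Sum>j<n. m i j * v j) = c * v i"
  shows "c = lam" "\<exists>s. \<forall>i<n. v i = s * phi $ i"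
proof -
  have "(\<Sum>i<n. phihat $ i * (\<Sum>j<n. m i j * v j)) = (\<Sum>i<n. \<Sum>j<n. phihat $ i * (m i j * v j))"
    by (simp add: sum_distrib_left)
  also have "\<dots> = (\<Sum>j<n. \<Sum>i<n. phihat $ i * (m i j * v j))" by (rule sum.swap)
  also have "\<dots> = (\<Sum>j<n. v j * (\<Sum>i<n. m i j * phihat $ i))"
    by (intro sum.cong refl) (simp add: sum_distrib_left mult_ac)
  also have "\<dots> = (\<Sum>j<n. v j * (lam * phihat $ j))" using PL by simp
  finally have "(\<Sum>i<n. phihat $ i * (c * v i)) = (\<Sum>j<n. v j * (lam * phihat $ j))"
    using ev by simp
  then have "c * (\<Sum>i<n. phihat $ i * v i) = lam * (\<Sum>i<n. phihat $ i * v i)"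
    by (simp add: sum_distrib_left algebra_simps)
  moreover have "0 < (\<Sum>i<n. phihat $ i * v i)" using n_pos vpos phihat_pos
    by (intro sum_pos) auto
  ultimately show cl: "c = lam" by simp
  obtain i0 where i0: "i0 < n" "\<forall>i<n. v i0 / phi $ i0 \<le> v i / phi $ i"
    using ex_min_idx[OF n_pos, of "\<lambda>i. v i / phi $ i"] by blast
  define s where "s = v i0 / phi $ i0"
  define d where "d i = v i - s * phi $ i" for i
  have dn: "\<forall>i<n. 0 \<le> d i"
  proof (intro allI impI)
    fix i assume i: "i < n"
    have "s \<le> v i / phi $ i" using i0 i by (simp add: s_def)
    then have "s * phi $ i \<le> v i" using phi_pos i by (simp add: le_divide_eq)
    then show "0 \<le> d i" by (simp add: d_def)
  qed
  have "phi $ i0 \<noteq> 0" using phi_pos i0(1) by (simp add: less_imp_neq[symmetric])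
  then have d0: "d i0 = 0" by (simp add: d_def s_def)
  have dev: "\<forall>i<n. (\<Sum>j<n. m i j * d j) = lam * d i"
  proof (intro allI impI)
    fix i assume i: "i < n"
    have "(\<Sum>j<n. m i j * d j) = (\<Sum>j<n. m i j * v j - s * (m i j * phi $ j))"
      by (intro sum.cong refl) (simp add: d_def right_diff_distrib)
    also have "\<dots> = (\<Sum>j<n. m i j * v j) - s * (\<Sum>j<n. m i j * phi $ j)"
      by (simp add: sum_subtractf sum_distrib_left)
    also have "\<dots> = lam * v i - s * (lam * phi $ i)" using ev PR i cl by simp
    also have "\<dots> = lam * d i" by (simp add: d_def right_diff_distrib)
    finally show "(\<Sum>j<n. m i j * d j) = lam * d i" .
  qed
  have "d y = 0" if y: "y < n" for y
  proof -
    obtain w where w: "walk n m N w" "w 0 = i0" "w N = y" using walkN[OF i0(1) y] by blast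
    have "wp m N w * d y \<le> lam ^ N * d i0" using eig_walk[OF dn dev w(1), of N] w by simp
    then have "wp m N w * d y \<le> 0" using d0 by simp
    moreover have "0 < wp m N w" using wpm_pos[OF w(1)] .
    ultimately have "d y \<le> 0" by (simp add: mult_le_0_iff)
    then show ?thesis using dn y by force
  qed
  then show "\<exists>s. \<forall>i<n. v i = s * phi $ i" by (intro exI[of _ s]) (auto simp: d_def)
qed

lemma p_eig: "\<forall>i<n. (\<Sum>j<n. m i j * p j) = (1 / cc) * p i"
proof (intro allI impI)
  fix i assume i: "i < n"
  have "1 = (\<Sum>j<n. Tr i j)" using Pi_stoch i by (simp add: stochastic_matrix_def)
  also have "\<dots> = (\<Sum>j<n. m i j * cc * p j / p i)" using Tr_gauge i by simp
  also have "\<dots> = cc / p i * (\<Sum>j<n. m i j * p j)" by (simp add: sum_distrib_left algebra_simps)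
  finally show "(\<Sum>j<n. m i j * p j) = (1 / cc) * p i" using cc_pos p_pos[OF i] by (simp add: field_simps)
qed

lemma cc_lam: "1 / cc = lam"
  using right_eig(1)[OF _ p_eig] p_pos by simp

lemma lam_pos: "0 < lam"
  using cc_lam cc_pos by (metis zero_less_divide_1_iff)

lemma Tr_final: "x < n \<Longrightarrow> y < n \<Longrightarrow> Tr x y = m x y * phi $ y / (lam * phi $ x)"
proof -
  assume xy: "x < n" "y < n"
  obtain s where s: "\<forall>i<n. p i = s * phi $ i" using right_eig(2)[OF _ p_eig] p_pos by auto
  have "s \<noteq> 0" using s p_pos[OF xy(1)] xy by auto
  have "Tr x y = m x y * cc * p y / p x" using Tr_gauge[OF xy] .
  also have "\<dots> = m x y * cc * phi $ y / phi $ x" using s xy \<open>s \<noteq> 0\<close> by simp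
  also have "cc = 1 / (1 / cc)" by simp
  also have "\<dots> = 1 / lam" using cc_lam by simp
  finally show ?thesis by simp
qed

abbreviation "nb i \<equiv> phi $ i * phihat $ i"

lemma nb_stat: "b < n \<Longrightarrow> push n Tr nb t b = nb b"
proof (induction t arbitrary: b)
  case 0 then show ?case by simp
next
  case (Suc t)
  have lp: "0 < lam" using lam_pos .
  have "push n Tr nb (Suc t) b = (\<Sum>c<n. nb c * Tr c b)" using Suc by simp
  also have "\<dots> = (\<Sum>c<n. phi $ b / lam * (m c b * phihat $ c))"
    using Tr_final Suc.prems phi_pos lp by (intro sum.cong refl) (auto simp: field_simps)
  also have "\<dots> = phi $ b / lam * (\<Sum>c<n. m c b * phihat $ c)" by (simp only: sum_distrib_left)
  also have "\<dots> = phi $ b / lam * (lam * phihat $ b)" using PL[OF Suc.prems] by simp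
  also have "\<dots> = nb b" using lp by simp
  finally show ?case .
qed

end


context sb begin

lemma nu_push: "b < n \<Longrightarrow> nu b = push n Tr nu T b"
proof -
  assume b: "b < n"
  have "nu b = marginal n T P T b" using bridge b
    by (auto simp: is_schroedinger_bridge_def bridge_admissible_def)
  also have "\<dots> = (\<Sum>x\<in>{x\<in>S. x T = b}. nu (x 0) * wp Tr T x)"
    unfolding marginal_def by (intro sum.cong refl) (simp add: P_eq)
  also have "\<dots> = push n Tr nu T b" by (rule path_sum[OF b])
  finally show ?thesis .
qed

lemma nu_final: "b < n \<Longrightarrow> nu b = nb b"
proof -
  assume b: "b < n"
  have nbp: "\<And>i. i < n \<Longrightarrow> 0 < nb i" using phi_pos phihat_pos by simp
  obtain i0 where i0: "i0 < n" "\<forall>i<n. nu i0 / nb i0 \<le> nu i / nb i"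
    using ex_min_idx[OF n_pos, of "\<lambda>i. nu i / nb i"] by blast
  define s where "s = nu i0 / nb i0"
  define d where "d = (\<lambda>i. nu i - s * nb i)"
  have dn: "\<forall>i<n. 0 \<le> d i"
  proof (intro allI impI)
    fix i assume i: "i < n"
    have "s \<le> nu i / nb i" using i0 i by (simp add: s_def)
    then have "s * nb i \<le> nu i" using nbp[OF i] by (simp add: le_divide_eq)
    then show "0 \<le> d i" by (simp add: d_def)
  qed
  have "nb i0 \<noteq> 0" using nbp[OF i0(1)] by (metis less_irrefl)
  then have d0: "d i0 = 0" by (simp add: d_def s_def)
  have dT: "push n Tr d T i0 = d i0"
    unfolding d_def push_lin using nu_push[OF i0(1)] nb_stat[OF i0(1)] by simp
  have dz: "d y = 0" if y: "y < n" for y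
  proof -
    obtain w where w: "walk n Tr T w" "w 0 = y" "w T = i0" using Tr_walkT[OF y i0(1)] by blast
    have "d (w 0) * wp Tr T w \<le> push n Tr d T (w T)"
      using push_walk[OF dn _ w(1), of Tr T] Tr_nonneg by auto
    then have "d y * wp Tr T w \<le> 0" using w dT d0 by simp
    moreover have "0 < wp Tr T w" by (rule wp_pos[OF w(1)]) auto
    ultimately have "d y \<le> 0" by (simp add: mult_le_0_iff)
    then show ?thesis using dn y by force
  qed
  have s1: "s = 1"
  proof -
    have "1 = (\<Sum>i<n. nu i)" using nu_prob by (simp add: prob_dist_on_def)
    also have "\<dots> = (\<Sum>i<n. s * nb i)" using dz by (intro sum.cong refl) (simp add: d_def)
    also have "\<dots> = s" using normalized by (simp add: sum_distrib_left[symmetric])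
    finally show ?thesis by simp
  qed
  show ?thesis using dz[OF b] s1 by (simp add: d_def)
qed

lemma main:
  "(\<forall>x<n. nu x = phi $ x * phihat $ x) \<and>
   (\<forall>x<n. \<forall>y<n. Tr x y = M $$ (x, y) * phi $ y
       / (spectral_radius (map_mat complex_of_real M) * phi $ x))"
  using nu_final Tr_final by (simp add: lam_def m_def)

end

theorem theorem3p4:
  fixes n N :: nat and M :: "real mat" and phi phihat :: "real vec"
    and mu0 nu :: "nat \<Rightarrow> real" and P :: "(nat \<Rightarrow> nat) \<Rightarrow> real"
    and Tr :: "nat \<Rightarrow> nat \<Rightarrow> real"
  assumes N: "N > 1"
    and M_dim: "M \<in> carrier_mat n n"
    and M_nonneg: "\<forall>i<n. \<forall>j<n. 0 \<le> M $$ (i, j)"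
    and M_prim: "\<forall>i<n. \<forall>j<n. 0 < (M ^\<^sub>m N) $$ (i, j)"
    and phi_dim: "phi \<in> carrier_vec n" and phihat_dim: "phihat \<in> carrier_vec n"
    and phi_pos: "\<forall>i<n. 0 < phi $ i" and phihat_pos: "\<forall>i<n. 0 < phihat $ i"
    and phi_right: "M *\<^sub>v phi = spectral_radius (map_mat complex_of_real M) \<cdot>\<^sub>v phi"
    and phihat_left: "transpose_mat M *\<^sub>v phihat
                        = spectral_radius (map_mat complex_of_real M) \<cdot>\<^sub>v phihat"
    and normalized: "(\<Sum>x<n. phi $ x * phihat $ x) = 1"
    and mu0_pos: "\<forall>x<n. 0 < mu0 x"
    and nu_prob: "prob_dist_on {..<n} nu"
    and bridge: "is_schroedinger_bridge n (2 * N) (ref_measure M mu0 (2 * N)) nu nu P"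
    and Pi_stoch: "stochastic_matrix n Tr"
    and homogeneous: "\<forall>x\<in>paths n (2 * N). P x = nu (x 0) * (\<Prod>t<2 * N. Tr (x t) (x (Suc t)))"
  shows "(\<forall>x<n. nu x = phi $ x * phihat $ x) \<and>
         (\<forall>x<n. \<forall>y<n. Tr x y = M $$ (x, y) * phi $ y
             / (spectral_radius (map_mat complex_of_real M) * phi $ x))"
proof -
  interpret sb n N M phi phihat mu0 nu P Tr
    by (rule sb.intro) (fact assms)+
  show ?thesis by (rule main)
qed


end
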